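(* Let $(S_n)_{n\in\mathbb{N}_0}$ be a demimartingale with $S_0\equiv 0$. Then for every $p\in(0,1)$ and every $n\in\mathbb{N}_0$, $$\mathbb{E}\Big[\Big(\sup_{0\le k\le n} S_k\Big)^p\Big]\le \frac{1}{1-p}\Big(\mathbb{E}\Big[-\inf_{0\le k\le n} S_k\Big]\Big)^p .$$
   Context: All random variables live on a common probability space. A sequence $(S_n)_{n\in\mathbb{N}_0}$ of integrable ($L^1$) real random variables is called a demimartingale if for every $j\ge 0$, $$\mathbb{E}\big[(S_{j+1}-S_j)\, f(S_0,S_1,\dots,S_j)\big]\ge 0$$ for every function $f:\mathbb{R}^{j+1}\to\mathbb{R}$ that is nondecreasing in each coordinate, whenever the expectation is defined. (Since $S_0\equiv0$ here, the dependence on $S_0$ is immaterial.) Note $\sup_{0\le k\le n}S_k\ge S_0=0$ and $-\inf_{0\le k\le n}S_k\ge 0$. *)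

theory Defs
  imports "HOL-Probability.Probability"
begin

definition coord_mono :: "nat \<Rightarrow> (real list \<Rightarrow> real) \<Rightarrow> bool" where
  "coord_mono m f \<longleftrightarrow>
     (\<forall>xs ys. length xs = m \<and> length ys = m \<and> (\<forall>i<m. xs ! i \<le> ys ! i) \<longrightarrow> f xs \<le> f ys)"

text \<open>Demimartingale: each \<open>S n\<close> integrable, and
  \<open>E[(S(j+1) - S j) f(S 0, ..., S j)] \<ge> 0\<close> for every coordinatewise nondecreasing \<open>f\<close>
  for which the expectation exists (i.e. the integrand is integrable).\<close>
definition demimartingale :: "'a measure \<Rightarrow> (nat \<Rightarrow> 'a \<Rightarrow> real) \<Rightarrow> bool" where
  "demimartingale M S \<longleftrightarrow>
     (\<forall>n. integrable M (S n)) \<and>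
     (\<forall>j f. coord_mono (Suc j) f \<longrightarrow>
        integrable M (\<lambda>\<omega>. (S (Suc j) \<omega> - S j \<omega>) * f (map (\<lambda>i. S i \<omega>) [0..<Suc j])) \<longrightarrow>
        (\<integral>\<omega>. (S (Suc j) \<omega> - S j \<omega>) * f (map (\<lambda>i. S i \<omega>) [0..<Suc j]) \<partial>M) \<ge> 0)"

end

theory Submission
  imports Defs
begin

lemma weak_to_Lp:
  fixes M :: "'a measure" and X :: "'a \<Rightarrow> real"
  assumes P: "prob_space M" and Xm[measurable]: "X \<in> borel_measurable M"
    and X0: "\<And>\<omega>. \<omega> \<in> space M \<Longrightarrow> 0 \<le> X \<omega>"
    and p: "0 < p" "p < 1" and c: "0 \<le> c"
    and W: "\<And>l. l > 0 \<Longrightarrow> l * measure M {\<omega>\<in>space M. l \<le> X \<omega>} \<le> c"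
  shows "(\<integral>\<omega>. X \<omega> powr p \<partial>M) \<le> 1 / (1 - p) * c powr p"
proof -
  interpret prob_space M by fact
  interpret pair_sigma_finite M lborel
    by (intro pair_sigma_finite.intro sigma_finite_lborel) unfold_locales
  define f where "f = (\<lambda>\<omega> t. indicator {0..<X \<omega> powr p} t :: ennreal)"
  have fm: "case_prod f \<in> borel_measurable (M \<Otimes>\<^sub>M lborel)"
  proof -
    have "case_prod f = (\<lambda>x. if 0 \<le> snd x \<and> snd x < X (fst x) powr p then 1 else 0)"
      by (auto simp: f_def fun_eq_iff indicator_def)
    also have "\<dots> \<in> borel_measurable (M \<Otimes>\<^sub>M lborel)" by measurable
    finally show ?thesis .
  qed
  have inner1: "(\<integral>\<^sup>+ t. f \<omega> t \<partial>lborel) = ennreal (X \<omega> powr p)" for \<omega>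
    unfolding f_def by (simp add: emeasure_lborel_Ico)
  define g where "g t = emeasure M {\<omega>\<in>space M. 0 \<le> t \<and> t < X \<omega> powr p}" for t
  have inner2: "(\<integral>\<^sup>+ \<omega>. f \<omega> t \<partial>M) = g t" for t
  proof -
    have "(\<integral>\<^sup>+ \<omega>. f \<omega> t \<partial>M) = (\<integral>\<^sup>+ \<omega>. indicator {\<omega>\<in>space M. 0 \<le> t \<and> t < X \<omega> powr p} \<omega> \<partial>M)"
      by (intro nn_integral_cong) (auto simp: f_def indicator_def)
    also have "\<dots> = g t" unfolding g_def by (intro nn_integral_indicator) measurable
    finally show ?thesis .
  qed
  have main: "(\<integral>\<^sup>+ \<omega>. ennreal (X \<omega> powr p) \<partial>M) = (\<integral>\<^sup>+ t. g t \<partial>lborel)"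
    using Fubini'[OF fm] by (simp add: inner1 inner2)
  define a where "a = c powr p"
  define e where "e = - 1 / p"
  have e: "e < -1" using p by (simp add: e_def field_simps)
  define h where "h t = ennreal (indicator {0..<a} t) + ennreal (indicator {a..} t * (c * t powr e))" for t
  have gle: "g t \<le> h t" if "t \<noteq> 0" for t
  proof -
    have a0: "a \<ge> 0" by (simp add: a_def)
    consider "t < 0" | "0 < t" "t < a" | "a \<le> t" using \<open>t \<noteq> 0\<close> by (metis linorder_neqE_linordered_idom not_less)
    then show ?thesis
    proof cases
      case 1 then show ?thesis by (simp add: g_def)
    next
      case 2
      have "g t \<le> 1" unfolding g_def by (rule emeasure_le_1) 
      then show ?thesis using 2 by (simp add: h_def)
    next
      case 3
      define l where "l = t powr (1/p)"
      have t0: "t > 0" using 3 a0 that by linarith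
      have l0: "l > 0" using t0 by (simp add: l_def)
      have sub: "{\<omega>\<in>space M. 0 \<le> t \<and> t < X \<omega> powr p} \<subseteq> {\<omega>\<in>space M. l \<le> X \<omega>}"
      proof safe
        fix \<omega> assume "\<omega> \<in> space M" "0 \<le> t" "t < X \<omega> powr p"
        hence "t powr (1/p) \<le> (X \<omega> powr p) powr (1/p)" using X0 t0 p
          by (intro powr_mono2) auto
        also have "\<dots> = X \<omega>" using X0[OF \<open>\<omega> \<in> space M\<close>] p by (simp add: powr_powr)
        finally show "l \<le> X \<omega>" by (simp add: l_def)
      qed
      have "g t \<le> emeasure M {\<omega>\<in>space M. l \<le> X \<omega>}"
        unfolding g_def by (intro emeasure_mono sub) measurable
      also have "\<dots> = ennreal (measure M {\<omega>\<in>space M. l \<le> X \<omega>})"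
        by (simp add: emeasure_eq_measure)
      also have "\<dots> \<le> ennreal (c * t powr e)"
      proof (rule ennreal_leI)
        have "measure M {\<omega>\<in>space M. l \<le> X \<omega>} \<le> c / l"
          using W[OF l0] l0 by (simp add: field_simps mult.commute)
        also have "c / l = c * t powr e"
          using t0 p by (simp add: l_def e_def powr_minus_divide divide_inverse powr_minus)
        finally show "measure M {\<omega>\<in>space M. l \<le> X \<omega>} \<le> c * t powr e" .
      qed
      finally show ?thesis using 3 by (simp add: h_def)
    qed
  qed
  have gh: "(\<integral>\<^sup>+ t. g t \<partial>lborel) \<le> (\<integral>\<^sup>+ t. h t \<partial>lborel)"
    by (intro nn_integral_mono_AE) (use AE_lborel_singleton[of 0] gle in \<open>auto elim!: eventually_mono\<close>)
  have hint: "(\<integral>\<^sup>+ t. h t \<partial>lborel) \<le> ennreal (1 / (1 - p) * c powr p)"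
  proof (cases "c = 0")
    case True
    then have "h t = 0" for t by (simp add: h_def a_def)
    then show ?thesis by simp
  next
    case False
    then have c0: "c > 0" using c by simp
    have a0: "a > 0" using c0 by (simp add: a_def)
    have "(\<integral>\<^sup>+ t. h t \<partial>lborel) = (\<integral>\<^sup>+ t. ennreal (indicator {0..<a} t) \<partial>lborel)
        + (\<integral>\<^sup>+ t. ennreal (indicator {a..} t * (c * t powr e)) \<partial>lborel)"
      unfolding h_def by (intro nn_integral_add) measurable
    also have "(\<integral>\<^sup>+ t. ennreal (indicator {0..<a} t) \<partial>lborel) = ennreal a"
      using a0 by (simp add: ennreal_indicator emeasure_lborel_Ico)
    also have "(\<integral>\<^sup>+ t. ennreal (indicator {a..} t * (c * t powr e)) \<partial>lborel)
        = ennreal (c * (-(a powr (e+1)) / (e+1)))"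
    proof (rule nn_integral_has_integral_lebesgue)
      show "0 \<le> c * x powr e" if "x \<in> {a..}" for x using c0 by simp
      show "((\<lambda>x. c * x powr e) has_integral (c * (-(a powr (e+1)) / (e+1)))) {a..}"
        by (intro has_integral_mult_right has_integral_powr_to_inf e a0)
    qed
    also have "ennreal a + ennreal (c * (-(a powr (e+1)) / (e+1))) = ennreal (a + c * (-(a powr (e+1)) / (e+1)))"
      using a0 c0 e by (intro ennreal_plus[symmetric]) (auto simp: divide_nonneg_neg)
    also have "a + c * (-(a powr (e+1)) / (e+1)) = 1 / (1 - p) * c powr p"
    proof -
      have ee: "p * (e + 1) = p - 1" using p by (simp add: e_def field_simps)
      have "a powr (e+1) = c powr (p - 1)"
        unfolding a_def powr_powr ee ..
      hence h1: "c * a powr (e+1) = c powr p" using c0 by (simp add: powr_diff)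
      have h2: "e + 1 = (p - 1) / p" using p by (simp add: e_def field_simps)
      have "c * (-(a powr (e+1)) / (e+1)) = - (c * a powr (e+1)) / (e+1)" by simp
      also have "\<dots> = - (c powr p) / ((p - 1) / p)" by (subst h1, subst h2, rule refl)
      also have "- (c powr p) / ((p - 1) / p) = p / (1 - p) * c powr p"
      proof -
        have "1 - p \<noteq> 0" "p - 1 = -(1-p)" using p by auto
        then show ?thesis by (simp only:) (simp add: divide_simps algebra_simps)
      qed
      finally have "c * (-(a powr (e+1)) / (e+1)) = p / (1 - p) * c powr p" .
      moreover have "c powr p + p / (1 - p) * c powr p = 1 / (1 - p) * c powr p"
      proof -
        have "1 - p \<noteq> 0" using p by auto
        then show ?thesis by (simp add: divide_simps algebra_simps)
      qed
      ultimately show ?thesis by (simp add: a_def)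
    qed
    finally show ?thesis by simp
  qed
  have "(\<integral>\<omega>. X \<omega> powr p \<partial>M) = enn2real (\<integral>\<^sup>+ \<omega>. ennreal (X \<omega> powr p) \<partial>M)"
    by (intro integral_eq_nn_integral) auto
  also have "\<dots> \<le> enn2real (ennreal (1 / (1 - p) * c powr p))"
    using main gh hint by (intro enn2real_mono) auto
  also have "\<dots> = 1 / (1 - p) * c powr p" using p c by simp
  finally show ?thesis .
qed
lemma abs_Min_le_sum:
  fixes S :: "nat \<Rightarrow> 'a \<Rightarrow> real"
  shows "\<bar>Min ((\<lambda>k. S k \<omega>) ` {0..n})\<bar> \<le> (\<Sum>k\<in>{0..n}. \<bar>S k \<omega>\<bar>)"
proof -
  have "Min ((\<lambda>k. S k \<omega>) ` {0..n}) \<in> (\<lambda>k. S k \<omega>) ` {0..n}" by (intro Min_in) auto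
  then obtain k where k: "k \<in> {0..n}" "Min ((\<lambda>k. S k \<omega>) ` {0..n}) = S k \<omega>" by blast
  have "\<bar>S k \<omega>\<bar> \<le> (\<Sum>k\<in>{0..n}. \<bar>S k \<omega>\<bar>)" using k by (intro member_le_sum) auto
  with k show ?thesis by simp
qed

lemma ex_map_upt:
  fixes g :: "nat \<Rightarrow> real"
  shows "(\<exists>i<length (map g [0..<Suc j]). l \<le> map g [0..<Suc j] ! i) \<longleftrightarrow> (\<exists>i\<le>j. l \<le> g i)"
proof -
  have "map g [0..<Suc j] ! i = g i" if "i < Suc j" for i
    using that by (simp del: upt_Suc)
  moreover have "length (map g [0..<Suc j]) = Suc j" by (simp del: upt_Suc)
  ultimately show ?thesis by (metis less_Suc_eq_le)
qed
lemma cm_aux: fixes l :: real shows "(\<forall>xs ys. length xs = m \<and> length ys = m \<and> (\<forall>i<m. xs ! i \<le> ys ! i) \<longrightarrow>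
   (if \<exists>i<length xs. l \<le> xs ! i then 1 else 0::real) \<le> (if \<exists>i<length ys. l \<le> ys ! i then 1 else 0))"
proof (intro allI impI)
  fix xs ys :: "real list" assume H: "length xs = m \<and> length ys = m \<and> (\<forall>i<m. xs ! i \<le> ys ! i)"
  show "(if \<exists>i<length xs. l \<le> xs ! i then 1 else 0::real) \<le> (if \<exists>i<length ys. l \<le> ys ! i then 1 else 0)"
  proof (cases "\<exists>i<length xs. l \<le> xs ! i")
    case True
    then obtain i where "i < length xs" "l \<le> xs ! i" by blast
    with H have "i < length ys" "l \<le> ys ! i" by (auto intro: order_trans)
    then show ?thesis by auto
  qed auto
qed

lemma demi_maximal:
  fixes M :: "'a measure" and S :: "nat \<Rightarrow> 'a \<Rightarrow> real"
  assumes P: "prob_space M" and D: "demimartingale M S"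
    and S0: "\<forall>\<omega>\<in>space M. S 0 \<omega> = 0" and l: "0 < l"
  shows "l * measure M {\<omega>\<in>space M. l \<le> Max ((\<lambda>k. S k \<omega>) ` {0..n})}
         \<le> (\<integral>\<omega>. - Min ((\<lambda>k. S k \<omega>) ` {0..n}) \<partial>M)"
proof -
  interpret prob_space M by fact
  have int: "integrable M (S i)" for i using D by (simp add: demimartingale_def)
  have Sm[measurable]: "S i \<in> borel_measurable M" for i using int by auto
  have DM: "\<And>j f. coord_mono (Suc j) f \<Longrightarrow>
        integrable M (\<lambda>\<omega>. (S (Suc j) \<omega> - S j \<omega>) * f (map (\<lambda>i. S i \<omega>) [0..<Suc j])) \<Longrightarrow>
        (\<integral>\<omega>. (S (Suc j) \<omega> - S j \<omega>) * f (map (\<lambda>i. S i \<omega>) [0..<Suc j]) \<partial>M) \<ge> 0"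
    using D by (simp add: demimartingale_def)
  define A where "A j \<omega> = (if l \<le> Max ((\<lambda>i. S i \<omega>) ` {0..j}) then 1 else 0 :: real)" for j \<omega>
  have Am[measurable]: "A j \<in> borel_measurable M" for j unfolding A_def by measurable
  have Aeq: "A j \<omega> = (if \<exists>i\<le>j. l \<le> S i \<omega> then 1 else 0)" for j \<omega>
    unfolding A_def by (subst Max_ge_iff) auto
  have incr: "(\<integral>\<omega>. S (Suc j) \<omega> - S j \<omega> \<partial>M) = 0" for j
  proof -
    have cm: "coord_mono (Suc j) (\<lambda>_. c)" for c by (simp add: coord_mono_def)
    have "(\<integral>\<omega>. (S (Suc j) \<omega> - S j \<omega>) * c \<partial>M) \<ge> 0" for c
      using DM[OF cm, of c] int by auto
    from this[of 1] this[of "-1"] show ?thesis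
      by (simp only: mult_1_right mult_minus1_right integral_minus)
  qed
  have ES: "(\<integral>\<omega>. S j \<omega> \<partial>M) = 0" for j
  proof (induction j)
    case 0
    have "(\<integral>\<omega>. S 0 \<omega> \<partial>M) = (\<integral>\<omega>. 0 \<partial>M)" using S0 by (intro Bochner_Integration.integral_cong) auto
    then show ?case by simp
  next
    case (Suc j)
    have "(\<integral>\<omega>. S (Suc j) \<omega> - S j \<omega> \<partial>M) = (\<integral>\<omega>. S (Suc j) \<omega> \<partial>M) - (\<integral>\<omega>. S j \<omega> \<partial>M)"
      using int by (intro Bochner_Integration.integral_diff) auto
    then show ?case using incr[of j] Suc by simp
  qed
  have intA: "integrable M (\<lambda>\<omega>. (S (Suc j) \<omega> - S j \<omega>) * A j \<omega>)" for j
    by (rule Bochner_Integration.integrable_bound[of _ "\<lambda>\<omega>. S (Suc j) \<omega> - S j \<omega>"]) (use int in \<open>auto simp: A_def\<close>)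
  have posA: "(\<integral>\<omega>. (S (Suc j) \<omega> - S j \<omega>) * A j \<omega> \<partial>M) \<ge> 0" for j
  proof -
    define f where "f xs = (if \<exists>i<length xs. l \<le> xs ! i then 1 else 0 :: real)" for xs
    have cm: "coord_mono (Suc j) f"
      unfolding coord_mono_def f_def by (rule cm_aux)
    have fA: "f (map (\<lambda>i. S i \<omega>) [0..<Suc j]) = A j \<omega>" for \<omega>
      unfolding f_def Aeq ex_map_upt by simp
    show ?thesis using DM[OF cm] intA[of j] by (simp only: fA)
  qed
  have key: "S m \<omega> * A m \<omega> \<ge> (\<Sum>j<m. (S (Suc j) \<omega> - S j \<omega>) * A j \<omega>) + l * A m \<omega>" for m \<omega>
  proof (induction m)
    case 0
    then show ?case by (simp add: Aeq)
  next
    case (Suc m)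
    have "S (Suc m) \<omega> * (A (Suc m) \<omega> - A m \<omega>) \<ge> l * (A (Suc m) \<omega> - A m \<omega>)"
      by (auto simp: Aeq le_Suc_eq)
    then show ?case using Suc by (simp add: algebra_simps)
  qed
  define B where "B = {\<omega>\<in>space M. l \<le> Max ((\<lambda>k. S k \<omega>) ` {0..n})}"
  have Bm: "B \<in> sets M" unfolding B_def by measurable
  have intAn: "integrable M (A n)"
    by (rule Bochner_Integration.integrable_bound[of _ "\<lambda>_. 1::real"]) (auto simp: A_def)
  have intSA: "integrable M (\<lambda>\<omega>. S n \<omega> * A n \<omega>)"
    by (rule Bochner_Integration.integrable_bound[of _ "S n"]) (use int in \<open>auto simp: A_def\<close>)
  have intMin0: "integrable M (\<lambda>\<omega>. Min ((\<lambda>k. S k \<omega>) ` {0..n}))"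
  proof (rule Bochner_Integration.integrable_bound[of _ "\<lambda>\<omega>. \<Sum>k\<in>{0..n}. \<bar>S k \<omega>\<bar>"])
    show "integrable M (\<lambda>\<omega>. \<Sum>k\<in>{0..n}. \<bar>S k \<omega>\<bar>)" using int by auto
    show "(\<lambda>\<omega>. Min ((\<lambda>k. S k \<omega>) ` {0..n})) \<in> borel_measurable M" by measurable
    show "AE \<omega> in M. norm (Min ((\<lambda>k. S k \<omega>) ` {0..n})) \<le> norm (\<Sum>k\<in>{0..n}. \<bar>S k \<omega>\<bar>)"
      using abs_Min_le_sum[of S _ n] by (auto intro!: AE_I2 order_trans[OF _ abs_ge_self])
  qed
  have intMin: "integrable M (\<lambda>\<omega>. - Min ((\<lambda>k. S k \<omega>) ` {0..n}))"
    by (rule Bochner_Integration.integrable_minus[OF intMin0])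
  have "(\<integral>\<omega>. A n \<omega> \<partial>M) = (\<integral>\<omega>. indicator B \<omega> \<partial>M)"
    by (rule Bochner_Integration.integral_cong) (auto simp: A_def B_def indicator_def)
  also have "\<dots> = measure M B" using Bm by (simp add: Int_absorb2 sets.sets_into_space)
  finally have EA: "(\<integral>\<omega>. A n \<omega> \<partial>M) = measure M B" .
  have "l * measure M B = (\<Sum>j<n. (\<integral>\<omega>. (S (Suc j) \<omega> - S j \<omega>) * A j \<omega> \<partial>M)) * 0 + l * measure M B" by simp
  have "l * measure M B \<le> (\<Sum>j<n. (\<integral>\<omega>. (S (Suc j) \<omega> - S j \<omega>) * A j \<omega> \<partial>M)) + l * measure M B"
    using posA by (simp add: sum_nonneg)
  also have "\<dots> = (\<integral>\<omega>. (\<Sum>j<n. (S (Suc j) \<omega> - S j \<omega>) * A j \<omega>) + l * A n \<omega> \<partial>M)"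
    using intA intAn EA by (simp add: Bochner_Integration.integral_add Bochner_Integration.integral_sum)
  also have "\<dots> \<le> (\<integral>\<omega>. S n \<omega> * A n \<omega> \<partial>M)"
    using key intA intAn intSA by (intro integral_mono) auto
  also have "\<dots> \<le> (\<integral>\<omega>. S n \<omega> + - Min ((\<lambda>k. S k \<omega>) ` {0..n}) \<partial>M)"
  proof (intro integral_mono intSA Bochner_Integration.integrable_add int intMin)
    fix \<omega> assume \<omega>: "\<omega> \<in> space M"
    have m1: "Min ((\<lambda>k. S k \<omega>) ` {0..n}) \<le> S n \<omega>" by (intro Min_le) auto
    have m2: "Min ((\<lambda>k. S k \<omega>) ` {0..n}) \<le> S 0 \<omega>" by (intro Min_le) auto
    show "S n \<omega> * A n \<omega> \<le> S n \<omega> + - Min ((\<lambda>k. S k \<omega>) ` {0..n})"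
    proof -
      have s0: "S 0 \<omega> = 0" using S0 \<omega> by blast
      have "A n \<omega> = 0 \<or> A n \<omega> = 1" by (simp add: A_def)
      then show ?thesis
      proof
        assume "A n \<omega> = 0" then have "S n \<omega> * A n \<omega> = 0" by simp
        then show ?thesis using m1 by linarith
      next
        assume "A n \<omega> = 1" then have "S n \<omega> * A n \<omega> = S n \<omega>" by simp
        then show ?thesis using m2 s0 by linarith
      qed
    qed
  qed
  also have "\<dots> = (\<integral>\<omega>. - Min ((\<lambda>k. S k \<omega>) ` {0..n}) \<partial>M)"
    using int intMin ES by (simp add: Bochner_Integration.integral_add)
  finally show ?thesis unfolding B_def .
qed
theorem lemma2p1:
  fixes M :: "'a measure" and S :: "nat \<Rightarrow> 'a \<Rightarrow> real" and p :: real and n :: nat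
  assumes "prob_space M"
    and "demimartingale M S"
    and "\<forall>\<omega>\<in>space M. S 0 \<omega> = 0"
    and "0 < p" and "p < 1"
  shows "(\<integral>\<omega>. (Max ((\<lambda>k. S k \<omega>) ` {0..n})) powr p \<partial>M)
           \<le> 1 / (1 - p) * (\<integral>\<omega>. - Min ((\<lambda>k. S k \<omega>) ` {0..n}) \<partial>M) powr p"
proof (rule weak_to_Lp[OF assms(1) _ _ assms(4,5)])
  interpret prob_space M by fact
  have int: "integrable M (S i)" for i using assms(2) by (simp add: demimartingale_def)
  have Sm[measurable]: "S i \<in> borel_measurable M" for i using int by auto
  show "(\<lambda>\<omega>. Max ((\<lambda>k. S k \<omega>) ` {0..n})) \<in> borel_measurable M" by measurable
  show "0 \<le> Max ((\<lambda>k. S k \<omega>) ` {0..n})" if "\<omega> \<in> space M" for \<omega>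
  proof -
    have "S 0 \<omega> \<le> Max ((\<lambda>k. S k \<omega>) ` {0..n})" by (intro Max_ge) auto
    then show ?thesis using assms(3) that by auto
  qed
  show "0 \<le> (\<integral>\<omega>. - Min ((\<lambda>k. S k \<omega>) ` {0..n}) \<partial>M)"
  proof (rule integral_nonneg_AE, rule AE_I2)
    fix \<omega> assume "\<omega> \<in> space M"
    have "Min ((\<lambda>k. S k \<omega>) ` {0..n}) \<le> S 0 \<omega>" by (intro Min_le) auto
    then show "0 \<le> - Min ((\<lambda>k. S k \<omega>) ` {0..n})" using assms(3) \<open>\<omega> \<in> space M\<close> by auto
  qed
  show "l * measure M {\<omega>\<in>space M. l \<le> Max ((\<lambda>k. S k \<omega>) ` {0..n})}
         \<le> (\<integral>\<omega>. - Min ((\<lambda>k. S k \<omega>) ` {0..n}) \<partial>M)" if "l > 0" for l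
    by (rule demi_maximal[OF assms(1-3) that])
qed

end
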